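(* Let $\mathbf{G}$ be a Markov equivalence class of DAGs over a finite set $\mathbf{V}$, $\mathcal{G}\in\mathbf{G}$, $\mathbf{Y}\subseteq\mathbf{V}$ and $\mathbf{Z}=\mathrm{can}_{\mathbf{G}}(\mathbf{Y})$. Then $\mathrm{an}_{\mathcal{G}}(\mathbf{Y})=\mathbf{Z}$ if and only if every edge of $\mathcal{G}$ between a node $Z\in\mathbf{Z}$ and a node $X\in\mathbf{V}\setminus\mathbf{Z}$ is directed out of $Z$ (i.e. $Z\to X$).
   Context: Two DAGs over $\mathbf{V}$ are Markov equivalent iff they have the same skeleton and the same unshielded colliders. $\mathrm{an}_{\mathcal{G}}(\mathbf{Y})$ is the set of nodes that either belong to $\mathbf{Y}$ or have a directed path in $\mathcal{G}$ to some node of $\mathbf{Y}$. $X$ is a compelled ancestor of $Y$ in $\mathbf{G}$ if $X\in\mathrm{an}_{\mathcal{G}}(Y)$ for every $\mathcal{G}\in\mathbf{G}$; $\mathrm{can}_{\mathbf{G}}(\mathbf{Y})$ is the union over $Y\in\mathbf{Y}$ of the sets of compelled ancestors of $Y$. *)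

theory Defs
  imports Main
begin

text \<open>A DAG over the node set V is represented by its set of directed edges
  E (a pair (x,y) in E means x \<rightarrow> y).\<close>

definition dag :: "'a set \<Rightarrow> ('a \<times> 'a) set \<Rightarrow> bool" where
  "dag V E \<longleftrightarrow> E \<subseteq> V \<times> V \<and> acyclic E"

definition adjacent :: "('a \<times> 'a) set \<Rightarrow> 'a \<Rightarrow> 'a \<Rightarrow> bool" where
  "adjacent E x y \<longleftrightarrow> (x, y) \<in> E \<or> (y, x) \<in> E"

definition skeleton :: "('a \<times> 'a) set \<Rightarrow> 'a set set" where
  "skeleton E = {{x, y} | x y. (x, y) \<in> E}"

definition unshielded_colliders :: "('a \<times> 'a) set \<Rightarrow> ('a \<times> 'a \<times> 'a) set" where
  "unshielded_colliders E =
     {(a, b, c). (a, b) \<in> E \<and> (c, b) \<in> E \<and> a \<noteq> c \<and> \<not> adjacent E a c}"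

definition markov_equiv :: "('a \<times> 'a) set \<Rightarrow> ('a \<times> 'a) set \<Rightarrow> bool" where
  "markov_equiv E1 E2 \<longleftrightarrow>
     skeleton E1 = skeleton E2 \<and> unshielded_colliders E1 = unshielded_colliders E2"

definition markov_equiv_class :: "'a set \<Rightarrow> ('a \<times> 'a) set set \<Rightarrow> bool" where
  "markov_equiv_class V GG \<longleftrightarrow>
     (\<exists>E0. dag V E0 \<and> GG = {E. dag V E \<and> markov_equiv E E0})"

definition an :: "('a \<times> 'a) set \<Rightarrow> 'a set \<Rightarrow> 'a set" where
  "an E Y = {x. \<exists>y\<in>Y. (x, y) \<in> E\<^sup>*}"

definition compelled_ancestor :: "('a \<times> 'a) set set \<Rightarrow> 'a \<Rightarrow> 'a \<Rightarrow> bool" where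
  "compelled_ancestor GG x y \<longleftrightarrow> (\<forall>E\<in>GG. x \<in> an E {y})"

definition can :: "'a set \<Rightarrow> ('a \<times> 'a) set set \<Rightarrow> 'a set \<Rightarrow> 'a set" where
  "can V GG Y = (\<Union>y\<in>Y. {x \<in> V. compelled_ancestor GG x y})"

end

theory Submission
  imports Defs
begin

theorem lemma5:
  fixes V :: "'a set" and GG :: "('a \<times> 'a) set set" and E :: "('a \<times> 'a) set"
    and Y Z :: "'a set"
  assumes "finite V"
    and "markov_equiv_class V GG"
    and "E \<in> GG"
    and "Y \<subseteq> V"
    and "Z = can V GG Y"
  shows "an E Y = Z \<longleftrightarrow>
         (\<forall>z\<in>Z. \<forall>x\<in>V - Z. adjacent E z x \<longrightarrow> (z, x) \<in> E)"
proof -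
  have dag: "dag V E" using assms(2,3) unfolding markov_equiv_class_def by auto
  hence EV: "E \<subseteq> V \<times> V" and ac: "acyclic E" by (auto simp: dag_def)
  have ZsubA: "Z \<subseteq> an E Y"
    using assms(3,5) by (auto simp: can_def compelled_ancestor_def an_def)
  have YZ: "Y \<subseteq> Z"
    using assms(4,5) by (auto simp: can_def compelled_ancestor_def an_def)
  have noloop: "(v, w) \<in> E \<Longrightarrow> (w, v) \<in> E \<Longrightarrow> False" for v w
  proof -
    assume "(v, w) \<in> E" "(w, v) \<in> E"
    hence "(v, v) \<in> E\<^sup>+" by auto
    thus False using ac by (simp add: acyclic_def)
  qed
  show ?thesis
  proof
    assume A: "an E Y = Z"
    show "\<forall>z\<in>Z. \<forall>x\<in>V - Z. adjacent E z x \<longrightarrow> (z, x) \<in> E"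
    proof (intro ballI impI)
      fix z x assume z: "z \<in> Z" and x: "x \<in> V - Z" and adj: "adjacent E z x"
      show "(z, x) \<in> E"
      proof (rule ccontr)
        assume "(z, x) \<notin> E"
        hence xz: "(x, z) \<in> E" using adj by (auto simp: adjacent_def)
        from z A obtain y where "y \<in> Y" "(z, y) \<in> E\<^sup>*" by (auto simp: an_def)
        hence "(x, y) \<in> E\<^sup>*" using xz by (meson converse_rtrancl_into_rtrancl)
        hence "x \<in> an E Y" using \<open>y \<in> Y\<close> by (auto simp: an_def)
        thus False using A x by auto
      qed
    qed
  next
    assume B: "\<forall>z\<in>Z. \<forall>x\<in>V - Z. adjacent E z x \<longrightarrow> (z, x) \<in> E"
    have "an E Y \<subseteq> Z"
    proof
      fix x assume "x \<in> an E Y"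
      then obtain y where y: "y \<in> Y" "(x, y) \<in> E\<^sup>*" by (auto simp: an_def)
      from y(2) show "x \<in> Z"
      proof (induction rule: converse_rtrancl_induct)
        case base thus ?case using y(1) YZ by auto
      next
        case (step w v)
        show ?case
        proof (rule ccontr)
          assume "w \<notin> Z"
          moreover have "w \<in> V" using step(1) EV by auto
          ultimately have "(v, w) \<in> E" using B step(1,3) by (auto simp: adjacent_def)
          thus False using noloop step(1) by blast
        qed
      qed
    qed
    thus "an E Y = Z" using ZsubA by auto
  qed
qed

end
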